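(* Fix $d \geq 1$, permutations $\rho,\sigma \in S(d)$ and an integer $r \geq 2$. Let $\mathrm{Walk}_r(\rho,\sigma)$ be the set of $r$-tuples $W = ((s_1\ t_1),\dots,(s_r\ t_r))$ of transpositions in $S(d)$, with $s_i<t_i$, such that $\sigma = \rho (s_1\ t_1)\cdots(s_r\ t_r)$. For $1 \leq i \leq r-1$, define $R_i : \mathrm{Walk}_r(\rho,\sigma) \to \mathrm{Walk}_r(\rho,\sigma)$ as follows. $R_i W$ agrees with $W$ except in positions $i$ and $i+1$, which are replaced by $(\ast\ t_{i+1}), (\ast\ t_i)$ (in that order), where: - if $t_i < t_{i+1}$, then $(\ast\ t_{i+1}) = (s_i\ t_i)(s_{i+1}\ t_{i+1})(s_i\ t_i)$ and $(\ast\ t_i) = (s_i\ t_i)$; - if $t_i > t_{i+1}$, then $(\ast\ t_{i+1}) = (s_{i+1}\ t_{i+1})$ and $(\ast\ t_i) = (s_{i+1}\ t_{i+1})(s_i\ t_i)(s_{i+1}\ t_{i+1})$; - if $t_i = t_{i+1}$, then $R_i W = W$. Then the operators $R_i$ satisfy: - $R_i^2 = I$ for $1 \leq i \leq r-1$; - $R_iR_{i+1}R_i = R_{i+1}R_iR_{i+1}$ for $1 \leq i \leq r-2$; - $R_iR_j = R_jR_i$ for $1 \leq i,j \leq r-1$ with $|i-j| \geq 2$. Moreover, if $W$ is transitive, then so is $R_iW$.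
   Context: A transposition of $S(d)$ is written $(s\ t)$ with $s<t$. A walk $W \in \mathrm{Walk}_r(\rho,\sigma)$ is called transitive if the subgroup of $S(d)$ generated by $\rho$, $\sigma$ and the transpositions of $W$ acts transitively on $\{1,\dots,d\}$. *)

theory Defs
  imports "HOL-Algebra.Sym_Groups"
begin

text \<open>A transposition (s t) with s < t is represented by the pair (s, t);
  as a permutation of {1..d} it is Transposition.transpose s t.
  Permutations are multiplied by composition: (p q) x = p (q x).\<close>

definition tr :: "nat \<times> nat \<Rightarrow> nat \<Rightarrow> nat" where
  "tr p = transpose (fst p) (snd p)"

definition walk_prod :: "(nat \<times> nat) list \<Rightarrow> nat \<Rightarrow> nat" where
  "walk_prod W = foldr (\<lambda>p f. tr p \<circ> f) W id"

definition Walk :: "nat \<Rightarrow> nat \<Rightarrow> (nat \<Rightarrow> nat) \<Rightarrow> (nat \<Rightarrow> nat) \<Rightarrow> (nat \<times> nat) list set" where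
  "Walk d r \<rho> \<sigma> = {W. length W = r \<and>
      (\<forall>p \<in> set W. 1 \<le> fst p \<and> fst p < snd p \<and> snd p \<le> d) \<and>
      \<sigma> = \<rho> \<circ> walk_prod W}"

definition tconj :: "nat \<times> nat \<Rightarrow> nat \<times> nat \<Rightarrow> nat \<times> nat" where
  "tconj c p = (let x = tr c (fst p); y = tr c (snd p) in (min x y, max x y))"

text \<open>The operator R_i (1-based index i, 1 \<le> i \<le> r-1): acts on positions i and i+1,
  i.e. list indices i-1 and i.\<close>
definition R :: "nat \<Rightarrow> (nat \<times> nat) list \<Rightarrow> (nat \<times> nat) list" where
  "R i W = (let p = W ! (i - 1); q = W ! i in
     if snd p < snd q then W[i - 1 := tconj p q, i := p]
     else if snd p > snd q then W[i - 1 := q, i := tconj q p]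
     else W)"

definition transitive_walk :: "nat \<Rightarrow> (nat \<Rightarrow> nat) \<Rightarrow> (nat \<Rightarrow> nat) \<Rightarrow> (nat \<times> nat) list \<Rightarrow> bool" where
  "transitive_walk d \<rho> \<sigma> W \<longleftrightarrow>
     (\<forall>x \<in> {1..d}. \<forall>y \<in> {1..d}.
        \<exists>g \<in> generate (sym_group d) ({\<rho>, \<sigma>} \<union> tr ` set W). g x = y)"

end

theory Submission
  imports Defs
begin

definition hur :: "nat\<times>nat \<Rightarrow> nat\<times>nat \<Rightarrow> (nat\<times>nat)\<times>(nat\<times>nat)" where
 "hur p q = (if snd p < snd q then ((transpose (fst p) (snd p) (fst q), snd q), p) else if snd p > snd q then (q, (transpose (fst q) (snd q) (fst p), snd p)) else (p,q))"
definition B1 where "B1 x = (case x of (a,b,c) \<Rightarrow> (fst (hur a b), snd (hur a b), c))"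
definition B2 where "B2 x = (case x of (a,b,c) \<Rightarrow> (a, fst (hur b c), snd (hur b c)))"
definition vld :: "nat\<times>nat \<Rightarrow> bool" where "vld p \<longleftrightarrow> fst p < snd p"
definition okd :: "nat \<Rightarrow> nat\<times>nat \<Rightarrow> bool" where "okd d p \<longleftrightarrow> 1 \<le> fst p \<and> fst p < snd p \<and> snd p \<le> d"

lemma tconj_conj: "transpose (f x) (f y) (f z) = f (transpose x y z)" if "inj f"
  using that by (auto simp: transpose_def dest: injD)

lemma conj_rule2: "y \<noteq> a \<Longrightarrow> y \<noteq> b \<Longrightarrow> transpose (transpose a b x) y w = transpose a b (transpose x y (transpose a b w))"
  by (auto simp: transpose_def)
lemma braid_trip: assumes "a1 < a2" "b1 < b2" "c1 < c2"
  shows "B1 (B2 (B1 ((a1,a2),(b1,b2),(c1,c2)))) = B2 (B1 (B2 ((a1,a2),(b1,b2),(c1,c2))))"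
  using assms
  by (cases a2 b2 rule: linorder_cases; cases b2 c2 rule: linorder_cases; cases a2 c2 rule: linorder_cases;
      simp add: B1_def B2_def hur_def conj_rule2)

lemma braid3: "vld a \<Longrightarrow> vld b \<Longrightarrow> vld c \<Longrightarrow> B1 (B2 (B1 (a,b,c))) = B2 (B1 (B2 (a,b,c)))"
  using braid_trip[of "fst a" "snd a" "fst b" "snd b" "fst c" "snd c"] by (simp add: vld_def)

lemma tconj_lt: "vld p \<Longrightarrow> vld q \<Longrightarrow> snd p < snd q \<Longrightarrow>
   tconj p q = (transpose (fst p) (snd p) (fst q), snd q)"
  by (cases p; cases q) (auto simp: vld_def tconj_def tr_def Let_def transpose_def min_def max_def)

lemma hur_vld: "vld a \<Longrightarrow> vld b \<Longrightarrow> vld (fst (hur a b)) \<and> vld (snd (hur a b))"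
  by (cases a; cases b) (auto simp: vld_def hur_def transpose_def)

lemma hur_okd: "okd d a \<Longrightarrow> okd d b \<Longrightarrow> okd d (fst (hur a b)) \<and> okd d (snd (hur a b))"
  by (cases a; cases b) (auto simp: okd_def hur_def transpose_def)

lemma hur_inv: "vld a \<Longrightarrow> vld b \<Longrightarrow> hur (fst (hur a b)) (snd (hur a b)) = (a, b)"
  by (cases a; cases b) (auto simp: vld_def hur_def transpose_def)

lemma tr_conj: assumes "vld a" "vld b" "snd a < snd b"
  shows "tr (transpose (fst a) (snd a) (fst b), snd b) = tr a \<circ> tr b \<circ> tr a"
proof -
  let ?f = "tr a"
  have inj: "inj ?f" by (simp add: tr_def inj_transpose)
  have fs: "?f (snd b) = snd b" using assms by (simp add: tr_def vld_def)
  show ?thesis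
  proof
    fix z
    have "transpose (?f (fst b)) (?f (snd b)) (?f (?f z)) = ?f (transpose (fst b) (snd b) (?f z))"
      by (rule tconj_conj[OF inj])
    then show "tr (transpose (fst a) (snd a) (fst b), snd b) z = (tr a \<circ> tr b \<circ> tr a) z"
      using fs by (simp add: tr_def)
  qed
qed

lemma hur_tr: assumes "vld a" "vld b"
  shows "tr (fst (hur a b)) \<in> {tr a, tr b, tr a \<circ> tr b \<circ> tr a, tr b \<circ> tr a \<circ> tr b}"
    and "tr (snd (hur a b)) \<in> {tr a, tr b, tr a \<circ> tr b \<circ> tr a, tr b \<circ> tr a \<circ> tr b}"
  using assms tr_conj[of a b] tr_conj[of b a] by (auto simp: hur_def)

lemma hur_prod: assumes "vld a" "vld b"
  shows "tr (fst (hur a b)) \<circ> tr (snd (hur a b)) = tr a \<circ> tr b"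
proof -
  have inv: "tr x \<circ> tr x = id" for x by (simp add: tr_def)
  have inv': "tr x \<circ> (tr x \<circ> g) = g" for x g by (simp add: tr_def comp_assoc[symmetric])
  show ?thesis using assms tr_conj[of a b] tr_conj[of b a]
    by (auto simp: hur_def comp_assoc inv' inv)
qed

lemma R_upd: assumes "Suc k < length W" "vld (W!k)" "vld (W!Suc k)"
  shows "R (Suc k) W = W[k := fst (hur (W!k) (W!Suc k)), Suc k := snd (hur (W!k) (W!Suc k))]"
  using assms tconj_lt[of "W!k" "W!Suc k"] tconj_lt[of "W!Suc k" "W!k"]
  by (auto simp: R_def hur_def Let_def)

lemma walk_prod_append: "walk_prod (xs @ ys) = walk_prod xs \<circ> walk_prod ys"
  by (induction xs) (auto simp: walk_prod_def)
lemma walk_prod_Cons: "walk_prod (x # ys) = tr x \<circ> walk_prod ys"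
  by (simp add: walk_prod_def)

lemma decomp: "Suc k < length L \<Longrightarrow> L = take k L @ L!k # L!Suc k # drop (Suc (Suc k)) L"
  by (metis Cons_nth_drop_Suc Suc_lessD append_take_drop_id)

lemma upd_decomp: "length xs = k \<Longrightarrow> (xs @ a # b # ys)[k := x, Suc k := y] = xs @ x # y # ys"
  by (simp add: list_update_append)

lemma R_dec: "length xs = k \<Longrightarrow> vld a \<Longrightarrow> vld b \<Longrightarrow>
   R (Suc k) (xs @ a # b # ys) = xs @ fst (hur a b) # snd (hur a b) # ys"
  using R_upd[of k "xs @ a # b # ys"] by (simp add: nth_append upd_decomp)

definition L3 :: "(nat\<times>nat)\<times>(nat\<times>nat)\<times>(nat\<times>nat) \<Rightarrow> (nat\<times>nat) list" where
  "L3 t = [fst t, fst (snd t), snd (snd t)]"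
definition V3 where "V3 t \<longleftrightarrow> vld (fst t) \<and> vld (fst (snd t)) \<and> vld (snd (snd t))"

lemma R1t: "length xs = k \<Longrightarrow> V3 t \<Longrightarrow> R (Suc k) (xs @ L3 t @ ys) = xs @ L3 (B1 t) @ ys"
  using R_dec[of xs k "fst t" "fst (snd t)" "snd (snd t) # ys"]
  by (cases t) (auto simp: L3_def V3_def B1_def)

lemma R2t: "length xs = k \<Longrightarrow> V3 t \<Longrightarrow> R (Suc (Suc k)) (xs @ L3 t @ ys) = xs @ L3 (B2 t) @ ys"
  using R_dec[of "xs @ [fst t]" "Suc k" "fst (snd t)" "snd (snd t)" ys]
  by (cases t) (auto simp: L3_def V3_def B2_def)

lemma V3_B1: "V3 t \<Longrightarrow> V3 (B1 t)" and V3_B2: "V3 t \<Longrightarrow> V3 (B2 t)"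
  using hur_vld by (cases t; auto simp: V3_def B1_def B2_def)+

lemma comm: assumes "Suc k < m" "Suc m < length W" "\<forall>p\<in>set W. vld p"
  shows "R (Suc k) (R (Suc m) W) = R (Suc m) (R (Suc k) W)"
proof -
  have v: "vld (W!n)" if "n < length W" for n using assms(3) that by auto
  define x where "x = fst (hur (W!m) (W!Suc m))"
  define y where "y = snd (hur (W!m) (W!Suc m))"
  define u where "u = fst (hur (W!k) (W!Suc k))"
  define w where "w = snd (hur (W!k) (W!Suc k))"
  have e1: "R (Suc m) W = W[m := x, Suc m := y]"
    unfolding x_def y_def by (rule R_upd) (use assms v in auto)
  have e2: "R (Suc k) W = W[k := u, Suc k := w]"
    unfolding u_def w_def by (rule R_upd) (use assms v in auto)
  define W1 where "W1 = W[m := x, Suc m := y]"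
  define W2 where "W2 = W[k := u, Suc k := w]"
  have n1: "W1!k = W!k" "W1!Suc k = W!Suc k" "length W1 = length W"
    using assms(1) unfolding W1_def by auto
  have n2: "W2!m = W!m" "W2!Suc m = W!Suc m" "length W2 = length W"
    using assms(1) unfolding W2_def by auto
  have e3: "R (Suc k) W1 = W1[k := u, Suc k := w]"
    unfolding u_def w_def n1(1,2)[symmetric] by (rule R_upd) (use assms v n1 in auto)
  have e4: "R (Suc m) W2 = W2[m := x, Suc m := y]"
    unfolding x_def y_def n2(1,2)[symmetric] by (rule R_upd) (use assms v n2 in auto)
  have e5: "W1[k := u, Suc k := w] = W2[m := x, Suc m := y]"
    unfolding W1_def W2_def using assms(1) by (simp add: list_update_swap)
  show ?thesis using e1 e2 e3 e4 e5 W1_def W2_def by simp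
qed

lemma walk_facts: "W \<in> Walk d r \<rho> \<sigma> \<Longrightarrow> length W = r \<and> (\<forall>p\<in>set W. okd d p) \<and> (\<forall>p\<in>set W. vld p) \<and> \<sigma> = \<rho> \<circ> walk_prod W"
  by (auto simp: Walk_def okd_def vld_def)

lemma step_dec: assumes "W \<in> Walk d r \<rho> \<sigma>" "i \<in> {1..r-1}"
  shows "\<exists>xs a b ys. W = xs @ a # b # ys \<and> length xs = i - 1 \<and> okd d a \<and> okd d b \<and> vld a \<and> vld b"
proof -
  have L: "length W = r" and ok: "\<forall>p\<in>set W. okd d p" using walk_facts[OF assms(1)] by auto
  have lt: "Suc (i-1) < length W" using assms(2) L by auto
  have W: "W = take (i-1) W @ W!(i-1) # W!Suc (i-1) # drop (Suc (Suc (i-1))) W"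
    by (rule decomp[OF lt])
  have o: "okd d (W!(i-1))" "okd d (W!Suc (i-1))" using ok lt by auto
  have v: "vld (W!(i-1))" "vld (W!Suc (i-1))" using o by (auto simp: okd_def vld_def)
  have l: "length (take (i-1) W) = i - 1" using lt by simp
  show ?thesis using W l o v by blast
qed

lemma okd_vld: "okd d p \<Longrightarrow> vld p" by (simp add: okd_def vld_def)


lemma braid3t: "V3 t \<Longrightarrow> B1 (B2 (B1 t)) = B2 (B1 (B2 t))"
  by (cases t) (simp add: braid3 V3_def)
lemma part1: assumes "W \<in> Walk d r \<rho> \<sigma>" "i \<in> {1..r-1}" shows "R i W \<in> Walk d r \<rho> \<sigma>"
proof -
  obtain xs a b ys where W: "W = xs @ a # b # ys" "length xs = i - 1" "okd d a" "okd d b" "vld a" "vld b"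
    using step_dec[OF assms] by blast
  obtain k where ik: "i = Suc k" using assms(2) by (cases i) auto
  have lx: "length xs = k" using W(2) ik by simp
  have RW: "R i W = xs @ fst (hur a b) # snd (hur a b) # ys"
    unfolding ik W(1) by (rule R_dec[OF lx W(5,6)])
  have F: "length W = r" "\<forall>p\<in>set W. okd d p" "\<sigma> = \<rho> \<circ> walk_prod W" using walk_facts[OF assms(1)] by auto
  have o: "okd d (fst (hur a b))" "okd d (snd (hur a b))" using hur_okd[OF W(3,4)] by auto
  have "walk_prod (R i W) = walk_prod W"
  proof -
    have "tr (fst (hur a b)) \<circ> (tr (snd (hur a b)) \<circ> g) = tr a \<circ> (tr b \<circ> g)" for g :: "nat \<Rightarrow> nat"
      using hur_prod[OF W(5,6)] by (metis comp_assoc)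
    then show ?thesis unfolding RW unfolding W(1) walk_prod_append walk_prod_Cons by (simp only:)
  qed
  then show ?thesis using F o unfolding Walk_def okd_def RW using W(1)
    by (auto simp: okd_def)
qed

lemma part2: assumes "W \<in> Walk d r \<rho> \<sigma>" "i \<in> {1..r-1}" shows "R i (R i W) = W"
proof -
  obtain xs a b ys where W: "W = xs @ a # b # ys" "length xs = i - 1" "okd d a" "okd d b" "vld a" "vld b"
    using step_dec[OF assms] by blast
  obtain k where ik: "i = Suc k" using assms(2) by (cases i) auto
  have lx: "length xs = k" using W(2) ik by simp
  have RW: "R i W = xs @ fst (hur a b) # snd (hur a b) # ys"
    unfolding ik W(1) by (rule R_dec[OF lx W(5,6)])
  have v: "vld (fst (hur a b))" "vld (snd (hur a b))" using hur_vld[OF W(5,6)] by auto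
  show ?thesis unfolding RW unfolding ik R_dec[OF lx v, of ys] hur_inv[OF W(5,6)] W(1) by simp
qed

lemma part3: assumes "W \<in> Walk d r \<rho> \<sigma>" "i \<in> {1..r-2}"
  shows "R i (R (i+1) (R i W)) = R (i+1) (R i (R (i+1) W))"
proof -
  define k where "k = i - 1"
  have F: "length W = r" "\<forall>p\<in>set W. vld p" using walk_facts[OF assms(1)] by auto
  have lt: "Suc (Suc k) < length W" using assms(2) F k_def by auto
  have D: "drop k W = [W!k, W!Suc k, W!Suc(Suc k)] @ drop (Suc(Suc(Suc k))) W"
    using lt by (simp add: Cons_nth_drop_Suc)
  define t where "t = (W!k, W!Suc k, W!Suc (Suc k))"
  define xs where "xs = take k W"
  define ys where "ys = drop (Suc (Suc (Suc k))) W"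
  have "xs @ L3 t @ ys = take k W @ drop k W" using D by (simp add: L3_def t_def xs_def ys_def)
  then have W3: "W = xs @ L3 t @ ys" by simp
  have lx: "length xs = k" using xs_def lt by simp
  have V: "V3 t" using F lt by (auto simp: t_def V3_def)
  have i1: "i = Suc k" "i + 1 = Suc (Suc k)" using assms(2) k_def by auto
  show ?thesis unfolding W3 i1
    using V V3_B1 V3_B2 R1t[OF lx] R2t[OF lx]
    by (simp add: braid3t)
qed

lemma part4: assumes "W \<in> Walk d r \<rho> \<sigma>" "i \<in> {1..r-1}" "j \<in> {1..r-1}" "\<bar>int i - int j\<bar> \<ge> 2"
  shows "R i (R j W) = R j (R i W)"
proof -
  have F: "length W = r" "\<forall>p\<in>set W. vld p" using walk_facts[OF assms(1)] by auto
  have "i + 2 \<le> j \<or> j + 2 \<le> i" using assms(4) by linarith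
  then show ?thesis
  proof
    assume h: "i + 2 \<le> j"
    have "R (Suc (i-1)) (R (Suc (j-1)) W) = R (Suc (j-1)) (R (Suc (i-1)) W)"
      by (rule comm) (use h assms F in auto)
    then show ?thesis using assms(2,3) by (simp add: Suc_pred')
  next
    assume h: "j + 2 \<le> i"
    have "R (Suc (j-1)) (R (Suc (i-1)) W) = R (Suc (i-1)) (R (Suc (j-1)) W)"
      by (rule comm) (use h assms F in auto)
    then show ?thesis using assms(2,3) by (simp add: Suc_pred')
  qed
qed

lemma gen_comp: "f \<in> generate (sym_group d) S \<Longrightarrow> g \<in> generate (sym_group d) S \<Longrightarrow> f \<circ> g \<in> generate (sym_group d) S"
  using generate.eng[of f "sym_group d" S g] by (simp add: sym_group_mult)

lemma gen_incl: assumes "W \<in> Walk d r \<rho> \<sigma>" "i \<in> {1..r-1}" "\<rho> permutes {1..d}" "\<sigma> permutes {1..d}"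
  shows "generate (sym_group d) ({\<rho>, \<sigma>} \<union> tr ` set (R i W)) \<subseteq> generate (sym_group d) ({\<rho>, \<sigma>} \<union> tr ` set W)"
proof -
  obtain xs a b ys where W: "W = xs @ a # b # ys" "length xs = i - 1" "okd d a" "okd d b" "vld a" "vld b"
    using step_dec[OF assms(1,2)] by blast
  obtain k where ik: "i = Suc k" using assms(2) by (cases i) auto
  have lx: "length xs = k" using W(2) ik by simp
  have RW: "R i W = xs @ fst (hur a b) # snd (hur a b) # ys"
    unfolding ik W(1) by (rule R_dec[OF lx W(5,6)])
  have F: "\<forall>p\<in>set W. okd d p" using walk_facts[OF assms(1)] by auto
  define G where "G = sym_group d"
  define S where "S = {\<rho>, \<sigma>} \<union> tr ` set W"
  define S' where "S' = {\<rho>, \<sigma>} \<union> tr ` set (R i W)"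
  have grp: "group G" unfolding G_def by (rule sym_group_is_group)
  have trc: "tr p \<in> carrier G" if "okd d p" for p
    using that unfolding G_def sym_group_carrier tr_def okd_def by (intro permutes_swap_id) auto
  have SC: "S \<subseteq> carrier G" using F trc assms(3,4) unfolding S_def by (auto simp: G_def sym_group_carrier)
  have sub: "subgroup (generate G S) G" by (rule group.generate_is_subgroup[OF grp SC])
  have ab: "tr a \<in> generate G S" "tr b \<in> generate G S"
    using W(1) unfolding S_def by (auto intro: generate.incl)
  have pc: "f \<circ> g \<in> generate G S" if "f \<in> generate G S" "g \<in> generate G S" for f g
    using gen_comp that unfolding G_def by blast
  have h: "tr (fst (hur a b)) \<in> generate G S" "tr (snd (hur a b)) \<in> generate G S"
  proof -
    have c: "tr a \<circ> tr b \<circ> tr a \<in> generate G S" "tr b \<circ> tr a \<circ> tr b \<in> generate G S"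
      by (intro pc ab)+
    show "tr (fst (hur a b)) \<in> generate G S" using hur_tr(1)[OF W(5,6)] ab c by auto
    show "tr (snd (hur a b)) \<in> generate G S" using hur_tr(2)[OF W(5,6)] ab c by auto
  qed
  have "S' \<subseteq> generate G S"
  proof
    fix x assume "x \<in> S'"
    then consider "x \<in> S" | "x = tr (fst (hur a b))" | "x = tr (snd (hur a b))"
      unfolding S'_def RW unfolding S_def W(1) by auto
    then show "x \<in> generate G S" using h by cases (auto intro: generate.incl)
  qed
  then have inc: "generate G S' \<subseteq> generate G S"
    by (rule group.generate_subgroup_incl[OF grp _ sub])
  then show ?thesis unfolding S_def S'_def G_def .
qed

lemma part5: assumes "W \<in> Walk d r \<rho> \<sigma>" "i \<in> {1..r-1}" "\<rho> permutes {1..d}" "\<sigma> permutes {1..d}"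
   "transitive_walk d \<rho> \<sigma> W"
  shows "transitive_walk d \<rho> \<sigma> (R i W)"
proof -
  have W': "R i W \<in> Walk d r \<rho> \<sigma>" by (rule part1[OF assms(1,2)])
  have "generate (sym_group d) ({\<rho>, \<sigma>} \<union> tr ` set (R i (R i W))) \<subseteq> generate (sym_group d) ({\<rho>, \<sigma>} \<union> tr ` set (R i W))"
    by (rule gen_incl[OF W' assms(2,3,4)])
  then have inc: "generate (sym_group d) ({\<rho>, \<sigma>} \<union> tr ` set W) \<subseteq> generate (sym_group d) ({\<rho>, \<sigma>} \<union> tr ` set (R i W))"
    unfolding part2[OF assms(1,2)] .
  show ?thesis using assms(5) inc unfolding transitive_walk_def by blast
qed

theorem proposition2p1:
  fixes d r :: nat and \<rho> \<sigma> :: "nat \<Rightarrow> nat"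
  assumes "d \<ge> 1" and "\<rho> permutes {1..d}" and "\<sigma> permutes {1..d}" and "r \<ge> 2"
  shows "(\<forall>i \<in> {1..r-1}. \<forall>W \<in> Walk d r \<rho> \<sigma>. R i W \<in> Walk d r \<rho> \<sigma>) \<and>
    (\<forall>i \<in> {1..r-1}. \<forall>W \<in> Walk d r \<rho> \<sigma>. R i (R i W) = W) \<and>
    (\<forall>i \<in> {1..r-2}. \<forall>W \<in> Walk d r \<rho> \<sigma>. R i (R (i+1) (R i W)) = R (i+1) (R i (R (i+1) W))) \<and>
    (\<forall>i \<in> {1..r-1}. \<forall>j \<in> {1..r-1}. \<bar>int i - int j\<bar> \<ge> 2 \<longrightarrow>
           (\<forall>W \<in> Walk d r \<rho> \<sigma>. R i (R j W) = R j (R i W))) \<and>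
    (\<forall>i \<in> {1..r-1}. \<forall>W \<in> Walk d r \<rho> \<sigma>. transitive_walk d \<rho> \<sigma> W \<longrightarrow> transitive_walk d \<rho> \<sigma> (R i W))"
proof (intro conjI ballI impI)
  fix i W assume "i \<in> {1..r-1}" "W \<in> Walk d r \<rho> \<sigma>"
  then show "R i W \<in> Walk d r \<rho> \<sigma>" by (rule part1[rotated])
next
  fix i W assume "i \<in> {1..r-1}" "W \<in> Walk d r \<rho> \<sigma>"
  then show "R i (R i W) = W" by (rule part2[rotated])
next
  fix i W assume "i \<in> {1..r-2}" "W \<in> Walk d r \<rho> \<sigma>"
  then show "R i (R (i+1) (R i W)) = R (i+1) (R i (R (i+1) W))" by (rule part3[rotated])
next
  fix i j W assume "i \<in> {1..r-1}" "j \<in> {1..r-1}" "\<bar>int i - int j\<bar> \<ge> 2" "W \<in> Walk d r \<rho> \<sigma>"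
  then show "R i (R j W) = R j (R i W)" using part4 by blast
next
  fix i W assume "i \<in> {1..r-1}" "W \<in> Walk d r \<rho> \<sigma>" "transitive_walk d \<rho> \<sigma> W"
  then show "transitive_walk d \<rho> \<sigma> (R i W)" using part5[OF _ _ assms(2,3)] by blast
qed

end
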